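(* Fix a positive integer $c$. Let $\mathcal{H}_c$ be the graph whose vertex set consists of every nonempty Hilbert scheme $\mathrm{Hilb}^P(\mathbb{P}^n)$ parametrizing codimension $c$ subschemes of some projective space $\mathbb{P}^n$ (i.e. $P$ admissible and $n=c+\deg P$), and whose edges are all pairs $(\mathrm{Hilb}^P(\mathbb{P}^n),\mathrm{Hilb}^{\sigma(P)}(\mathbb{P}^n))$ and $(\mathrm{Hilb}^P(\mathbb{P}^n),\mathrm{Hilb}^{\lambda(P)}(\mathbb{P}^{n+1}))$ where $P$ is admissible and $n:=c+\deg P$. Then $\mathcal{H}_c$ is an infinite binary tree, with root $\mathrm{Hilb}^1(\mathbb{P}^c)$.
   Context: $\Bbbk$ is an algebraically closed field and $\mathrm{Hilb}^P(\mathbb{P}^n)$ is the Hilbert scheme parametrizing closed subschemes of $\mathbb{P}^n_\Bbbk$ with Hilbert polynomial $P$ (Hilbert schemes for distinct pairs $(n,P)$ are regarded as distinct vertices). Binomial coefficients are polynomials: $\binom{t+a}{b}=\frac{(t+a)\cdots(t+a-b+1)}{b!}$ for $b\ge0$, $0$ for $b<0$. An admissible Hilbert polynomial is the Hilbert polynomial of a nonempty closed subscheme of some projective space; each has a unique Gotzmann expression $P(t)=\sum_{j=1}^r\binom{t+b_j-(j-1)}{b_j}$ with $b_1\ge\dots\ge b_r\ge 0$. $\sigma(P):=1+P$ and $\lambda(P)$ is the admissible polynomial with Gotzmann expression $\sum_{j=1}^r\binom{t+b_j+1-(j-1)}{b_j+1}$. *)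

theory Defs
  imports "HOL-Computational_Algebra.Polynomial"
begin

text \<open>binom_poly a b is the polynomial in t given by binom(t+a, b) = (t+a)(t+a-1)...(t+a-b+1)/b!
  (b is a natural number, so the case b < 0 does not arise).\<close>
definition binom_poly :: "int \<Rightarrow> nat \<Rightarrow> rat poly" where
  "binom_poly a b = smult (1 / fact b) (\<Prod>i<b. [:of_int a - of_nat i, 1:])"

text \<open>The polynomial sum over j=1..r of binom(t + b_j - (j-1), b_j); with 0-based list index j
  the shift is b_j - j.\<close>
definition gotzmann_poly :: "nat list \<Rightarrow> rat poly" where
  "gotzmann_poly bs = (\<Sum>j<length bs. binom_poly (int (bs ! j) - int j) (bs ! j))"

definition is_gotzmann_expr :: "nat list \<Rightarrow> rat poly \<Rightarrow> bool" where
  "is_gotzmann_expr bs P \<longleftrightarrow> bs \<noteq> [] \<and> sorted_wrt (\<ge>) bs \<and> P = gotzmann_poly bs"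

definition admissible :: "rat poly \<Rightarrow> bool" where
  "admissible P \<longleftrightarrow> (\<exists>bs. is_gotzmann_expr bs P)"

definition sigma_hp :: "rat poly \<Rightarrow> rat poly" where
  "sigma_hp P = 1 + P"

definition lambda_hp :: "rat poly \<Rightarrow> rat poly" where
  "lambda_hp P = gotzmann_poly (map Suc (THE bs. is_gotzmann_expr bs P))"

text \<open>A vertex Hilb^P(P^n) is represented by the pair (n, P).\<close>
definition H_vertices :: "nat \<Rightarrow> (nat \<times> rat poly) set" where
  "H_vertices c = {(n, P). admissible P \<and> n = c + degree P}"

definition H_edges :: "nat \<Rightarrow> (nat \<times> rat poly) set set" where
  "H_edges c =
     {{(n, P), (n, sigma_hp P)} | n P. admissible P \<and> n = c + degree P} \<union>
     {{(n, P), (n + 1, lambda_hp P)} | n P. admissible P \<and> n = c + degree P}"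

definition is_graph :: "'a set \<Rightarrow> 'a set set \<Rightarrow> bool" where
  "is_graph V E \<longleftrightarrow> (\<forall>e\<in>E. e \<subseteq> V \<and> card e = 2)"

definition adj :: "'a set set \<Rightarrow> 'a \<Rightarrow> 'a \<Rightarrow> bool" where
  "adj E u v \<longleftrightarrow> {u, v} \<in> E"

definition neighbours :: "'a set set \<Rightarrow> 'a \<Rightarrow> 'a set" where
  "neighbours E v = {w. adj E v w}"

definition is_walk :: "'a set set \<Rightarrow> 'a list \<Rightarrow> bool" where
  "is_walk E xs \<longleftrightarrow> xs \<noteq> [] \<and> (\<forall>i. Suc i < length xs \<longrightarrow> adj E (xs ! i) (xs ! Suc i))"

definition connected_graph :: "'a set \<Rightarrow> 'a set set \<Rightarrow> bool" where
  "connected_graph V E \<longleftrightarrow> V \<noteq> {} \<and>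
     (\<forall>u\<in>V. \<forall>v\<in>V. \<exists>xs. is_walk E xs \<and> hd xs = u \<and> last xs = v)"

definition is_cycle :: "'a set set \<Rightarrow> 'a list \<Rightarrow> bool" where
  "is_cycle E xs \<longleftrightarrow> length xs \<ge> 3 \<and> distinct xs \<and> is_walk E xs \<and> adj E (last xs) (hd xs)"

definition is_tree :: "'a set \<Rightarrow> 'a set set \<Rightarrow> bool" where
  "is_tree V E \<longleftrightarrow> is_graph V E \<and> connected_graph V E \<and> (\<nexists>xs. is_cycle E xs)"

text \<open>An infinite (full) binary tree rooted at r: an infinite tree in which the root has exactly
  two neighbours (its two children) and every other vertex exactly three (its parent and two children).\<close>
definition infinite_binary_tree :: "'a set \<Rightarrow> 'a set set \<Rightarrow> 'a \<Rightarrow> bool" where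
  "infinite_binary_tree V E r \<longleftrightarrow> is_tree V E \<and> infinite V \<and> r \<in> V \<and>
     card (neighbours E r) = 2 \<and> (\<forall>v\<in>V - {r}. card (neighbours E v) = 3)"

end

theory Submission
  imports Defs
begin

lemma binom_poly_deg: "degree (binom_poly a b) = b"
  and binom_poly_coeff: "coeff (binom_poly a b) b = 1 / fact b"
proof -
  have d: "degree (\<Prod>i<b. [:of_int a - of_nat i, 1:] :: rat poly) = b"
    by (subst degree_prod_sum_eq) auto
  have l: "lead_coeff (\<Prod>i<b. [:of_int a - of_nat i, 1:] :: rat poly) = 1"
    by (simp add: lead_coeff_prod)
  show "degree (binom_poly a b) = b" using d by (simp add: binom_poly_def)
  show "coeff (binom_poly a b) b = 1 / fact b" using d l by (simp add: binom_poly_def)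
qed

fun G :: "int \<Rightarrow> nat list \<Rightarrow> rat poly" where
  "G s [] = 0"
| "G s (b # bs) = binom_poly (int b - s) b + G (s + 1) bs"

lemma G_sum: "G s bs = (\<Sum>j<length bs. binom_poly (int (bs ! j) - (s + int j)) (bs ! j))"
proof (induction bs arbitrary: s)
  case Nil then show ?case by simp
next
  case (Cons b bs)
  show ?case
    by (simp del: sum.lessThan_Suc add: Cons sum.lessThan_Suc_shift algebra_simps)
qed

lemma gotz_G: "gotzmann_poly bs = G 0 bs"
  by (simp add: G_sum gotzmann_poly_def)

lemma G_deg_aux:
  "sorted_wrt (\<ge>) bs \<Longrightarrow> (\<forall>x\<in>set bs. x \<le> b) \<Longrightarrow>
   degree (G s bs) \<le> b \<and> coeff (G s bs) b \<ge> 0 \<and> (b \<in> set bs \<longrightarrow> coeff (G s bs) b > 0)"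
proof (induction bs arbitrary: s)
  case Nil then show ?case by simp
next
  case (Cons x xs)
  have IH: "degree (G (s+1) xs) \<le> b \<and> coeff (G (s+1) xs) b \<ge> 0 \<and> (b \<in> set xs \<longrightarrow> coeff (G (s+1) xs) b > 0)"
    using Cons by auto
  have xb: "x \<le> b" using Cons.prems by auto
  have c1: "coeff (binom_poly (int x - s) x) b \<ge> 0"
  proof (cases "x = b")
    case True then show ?thesis by (simp add: binom_poly_coeff)
  next
    case False then show ?thesis using xb by (simp add: coeff_eq_0 binom_poly_deg)
  qed
  have d: "degree (G s (x # xs)) \<le> b"
    using IH xb by (simp add: degree_add_le binom_poly_deg)
  show ?case
  proof (intro conjI impI)
    show "degree (G s (x # xs)) \<le> b" by (fact d)
    show "coeff (G s (x # xs)) b \<ge> 0" using IH c1 by simp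
    assume "b \<in> set (x # xs)"
    then consider "x = b" | "b \<in> set xs" by auto
    then show "coeff (G s (x # xs)) b > 0"
    proof cases
      case 1 then show ?thesis using IH by (simp add: binom_poly_coeff add_pos_nonneg)
    next
      case 2 then show ?thesis using IH c1 by (simp add: add_nonneg_pos)
    qed
  qed
qed

lemma G_deg:
  assumes "sorted_wrt (\<ge>) bs" "bs \<noteq> []"
  shows "degree (G s bs) = hd bs" "G s bs \<noteq> 0"
proof -
  obtain b xs where bs: "bs = b # xs" using assms by (cases bs) auto
  have "\<forall>x\<in>set bs. x \<le> b" using assms(1) bs by auto
  from G_deg_aux[OF assms(1) this, of s] bs
  have h: "degree (G s bs) \<le> b" "coeff (G s bs) b > 0" by auto
  then have "degree (G s bs) \<ge> b" by (intro le_degree) auto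
  with h show "degree (G s bs) = hd bs" using bs by simp
  show "G s bs \<noteq> 0" using h by auto
qed

lemma G_inj:
  "sorted_wrt (\<ge>) bs \<Longrightarrow> sorted_wrt (\<ge>) cs \<Longrightarrow> G s bs = G s cs \<Longrightarrow> bs = cs"
proof (induction bs arbitrary: s cs)
  case Nil
  then show ?case using G_deg(2)[of cs s] by (cases cs) auto
next
  case (Cons b bs)
  show ?case
  proof (cases cs)
    case Nil then show ?thesis using Cons.prems G_deg(2)[of "b # bs" s] by auto
  next
    case (Cons c cs')
    have "b = c" using G_deg(1)[of "b # bs" s] G_deg(1)[of "c # cs'" s] Cons.prems Cons by auto
    then have "G (s+1) bs = G (s+1) cs'" using Cons.prems Cons by simp
    then have "bs = cs'" using Cons.IH[of cs' "s+1"] Cons.prems Cons by simp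
    then show ?thesis using \<open>b = c\<close> Cons by simp
  qed
qed

lemma G_snoc: "G s (bs @ [0]) = G s bs + 1"
  by (induction bs arbitrary: s) (simp_all add: binom_poly_def)

lemma adj_sym: "adj E a b = adj E b a"
  by (simp add: adj_def insert_commute)

lemma walk_single[simp]: "is_walk E [x]"
  by (simp add: is_walk_def)

lemma walk_Cons2[simp]: "is_walk E (x # y # xs) \<longleftrightarrow> adj E x y \<and> is_walk E (y # xs)"
proof
  assume a: "is_walk E (x # y # xs)"
  have "adj E x y" using spec[OF conjunct2[OF a[unfolded is_walk_def]], of 0] by simp
  moreover have "is_walk E (y # xs)"
    unfolding is_walk_def
  proof (intro conjI allI impI)
    fix i assume "Suc i < length (y # xs)"
    then show "adj E ((y # xs) ! i) ((y # xs) ! Suc i)"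
      using spec[OF conjunct2[OF a[unfolded is_walk_def]], of "Suc i"] by simp
  qed simp
  ultimately show "adj E x y \<and> is_walk E (y # xs)" by simp
next
  assume a: "adj E x y \<and> is_walk E (y # xs)"
  show "is_walk E (x # y # xs)"
    unfolding is_walk_def
  proof (intro conjI allI impI)
    fix i assume "Suc i < length (x # y # xs)"
    then show "adj E ((x # y # xs) ! i) ((x # y # xs) ! Suc i)"
      using a unfolding is_walk_def by (cases i) auto
  qed simp
qed

lemma walk_append:
  "is_walk E xs \<Longrightarrow> is_walk E (y # ys) \<Longrightarrow> adj E (last xs) y \<Longrightarrow> is_walk E (xs @ y # ys)"
proof (induction xs)
  case Nil then show ?case by (simp add: is_walk_def)
next
  case (Cons x xs)
  show ?case
  proof (cases xs)
    case Nil then show ?thesis using Cons by simp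
  next
    case (Cons x' xs')
    then show ?thesis using Cons.IH Cons.prems by simp
  qed
qed

lemma walk_rev: "is_walk E xs \<Longrightarrow> is_walk E (rev xs)"
proof (induction xs)
  case Nil then show ?case by (simp add: is_walk_def)
next
  case (Cons x xs)
  show ?case
  proof (cases xs)
    case Nil then show ?thesis by simp
  next
    case (Cons x' xs')
    have "is_walk E (rev xs)" using Cons.IH Cons.prems Cons by simp
    moreover have "adj E (last (rev xs)) x" using Cons.prems Cons by (simp add: adj_sym)
    ultimately show ?thesis using walk_append[of E "rev xs" x "[]"] by simp
  qed
qed

lemma abstract_tree:
  fixes V :: "'a set" and s t :: "'a \<Rightarrow> 'a" and h :: "'a \<Rightarrow> nat"
  assumes E: "E = {{v, s v} | v. v \<in> V} \<union> {{v, t v} | v. v \<in> V}"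
  and r: "r \<in> V"
  and sV: "\<forall>v\<in>V. s v \<in> V" and tV: "\<forall>v\<in>V. t v \<in> V"
  and sinj: "inj_on s V" and tinj: "inj_on t V"
  and disj: "\<forall>v\<in>V. \<forall>w\<in>V. s v \<noteq> t w"
  and rs: "\<forall>v\<in>V. s v \<noteq> r \<and> t v \<noteq> r"
  and cover: "\<forall>w\<in>V. w \<noteq> r \<longrightarrow> (\<exists>v\<in>V. w = s v \<or> w = t v)"
  and hs: "\<forall>v\<in>V. h (s v) = Suc (h v) \<and> h (t v) = Suc (h v)"
  shows "infinite_binary_tree V E r"
proof -
  have adj_iff: "adj E a b \<longleftrightarrow> (\<exists>v\<in>V. (a = v \<and> b = s v) \<or> (a = s v \<and> b = v) \<or>
      (a = v \<and> b = t v) \<or> (a = t v \<and> b = v))" for a b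
    unfolding adj_def E by (auto simp: doubleton_eq_iff)
  have adjV: "adj E a b \<Longrightarrow> a \<in> V \<and> b \<in> V" for a b
    using adj_iff sV tV by auto
  have sne: "v \<in> V \<Longrightarrow> s v \<noteq> v" "v \<in> V \<Longrightarrow> t v \<noteq> v" for v
    using hs by (metis n_not_Suc_n)+
  have graph: "is_graph V E"
    unfolding is_graph_def E using sV tV sne by (auto simp: card_insert_if) (metis sne)+
  have par: "adj E w x \<Longrightarrow> h x \<le> h w \<Longrightarrow> x \<in> V \<and> (w = s x \<or> w = t x)" for w x
    using hs unfolding adj_iff by auto
  have par_uniq: "x \<in> V \<Longrightarrow> y \<in> V \<Longrightarrow> (w = s x \<or> w = t x) \<Longrightarrow> (w = s y \<or> w = t y) \<Longrightarrow> x = y"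
    for w x y using sinj tinj disj by (auto dest: inj_onD) (metis)
  have reach: "w \<in> V \<Longrightarrow> \<exists>xs. is_walk E xs \<and> hd xs = r \<and> last xs = w" for w
  proof (induction "h w" arbitrary: w rule: less_induct)
    case less
    show ?case
    proof (cases "w = r")
      case True then show ?thesis by (intro exI[of _ "[r]"]) simp
    next
      case False
      then obtain p where p: "p \<in> V" "w = s p \<or> w = t p" using cover less.prems by auto
      then have "h p < h w" using hs by auto
      then obtain xs where xs: "is_walk E xs" "hd xs = r" "last xs = p" using less p by blast
      have "adj E p w" using p adj_iff by auto
      then have "is_walk E (xs @ [w])" using walk_append[of E xs w "[]"] xs by simp
      moreover have "xs \<noteq> []" using xs by (simp add: is_walk_def)
      ultimately show ?thesis using xs by (intro exI[of _ "xs @ [w]"]) simp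
    qed
  qed
  have conn: "connected_graph V E"
    unfolding connected_graph_def
  proof (intro conjI ballI)
    show "V \<noteq> {}" using r by auto
    fix u v assume u: "u \<in> V" and v: "v \<in> V"
    obtain xu where xu: "is_walk E xu" "hd xu = r" "last xu = u" using reach u by blast
    obtain xv where xv: "is_walk E xv" "hd xv = r" "last xv = v" using reach v by blast
    have xune: "xu \<noteq> []" using xu by (simp add: is_walk_def)
    have rw: "is_walk E (rev xu)" "hd (rev xu) = u" "last (rev xu) = r"
      using walk_rev[OF xu(1)] xu xune by (auto simp: hd_rev last_rev)
    obtain ys where ys: "xv = r # ys" using xv by (cases xv) (auto simp: is_walk_def)
    show "\<exists>xs. is_walk E xs \<and> hd xs = u \<and> last xs = v"
    proof (cases ys)
      case Nil then show ?thesis using rw xv ys by auto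
    next
      case (Cons y ys')
      have "is_walk E (rev xu @ y # ys')"
        using walk_append[of E "rev xu" y ys'] rw xv ys Cons by simp
      then show ?thesis using rw xv ys Cons xune
        by (intro exI[of _ "rev xu @ y # ys'"]) simp
    qed
  qed
  have nocyc: "\<nexists>xs. is_cycle E xs"
  proof
    assume "\<exists>xs. is_cycle E xs"
    then obtain xs where cyc: "is_cycle E xs" by blast
    define n where "n = length xs"
    have n3: "n \<ge> 3" and dist: "distinct xs" and wk: "is_walk E xs" and lh: "adj E (last xs) (hd xs)"
      using cyc by (auto simp: is_cycle_def n_def)
    have adjnext: "adj E (xs ! i) (xs ! ((i + 1) mod n))" if "i < n" for i
    proof (cases "i + 1 < n")
      case True then show ?thesis using wk by (simp add: is_walk_def n_def)
    next
      case False
      then have i1: "i + 1 = n" using that by simp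
      then have "i = n - 1" "(i + 1) mod n = 0" by auto
      moreover have "xs \<noteq> []" using n3 n_def by auto
      ultimately show ?thesis using lh n3 by (simp add: n_def last_conv_nth hd_conv_nth)
    qed
    have inV: "xs ! i \<in> V" if "i < n" for i using adjnext[OF that] adjV by blast
    define M where "M = Max (h ` set xs)"
    have "M \<in> h ` set xs" unfolding M_def using n3 n_def by (intro Max_in) auto
    then obtain m where m: "m < n" "h (xs ! m) = M" by (auto simp: in_set_conv_nth n_def)
    have mx: "i < n \<Longrightarrow> h (xs ! i) \<le> h (xs ! m)" for i
      using m unfolding M_def n_def by (simp add: Max_ge)
    define p where "p = (m + n - 1) mod n"
    define q where "q = (m + 1) mod n"
    have pn: "p < n" "q < n" using n3 unfolding p_def q_def by (intro mod_less_divisor; linarith)+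
    have pm: "(p + 1) mod n = m"
    proof -
      have "(p + 1) mod n = (m + n - 1 + 1) mod n" unfolding p_def using mod_Suc_eq[of "m + n - 1" n] by simp
      also have "m + n - 1 + 1 = m + n" using n3 by linarith
      finally show ?thesis using m by simp
    qed
    have pq: "p \<noteq> q"
    proof -
      consider "m = 0" | "m = n - 1" | "0 < m \<and> m < n - 1" using m by linarith
      then show ?thesis
      proof cases
        case 1
        have "p = (n - 1) mod n" unfolding p_def using 1 by simp
        also have "\<dots> = n - 1" using n3 by (intro mod_less) linarith
        finally have "p = n - 1" .
        moreover have "q = 1" unfolding q_def using 1 n3 by (simp add: mod_less)
        ultimately show ?thesis using n3 by linarith
      next
        case 2
        then have e: "m + n - 1 = (n - 2) + n" using n3 by linarith
        have "p = ((n - 2) + n) mod n" unfolding p_def by (simp only: e)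
        also have "\<dots> = (n - 2) mod n" by (simp only: mod_add_self2)
        also have "\<dots> = n - 2" using n3 by (intro mod_less) linarith
        finally have "p = n - 2" .
        moreover have "m + 1 = n" using 2 n3 by linarith
        then have "q = 0" unfolding q_def by simp
        ultimately show ?thesis using n3 by linarith
      next
        case 3
        then have e: "m + n - 1 = (m - 1) + n" using n3 by linarith
        have "p = ((m - 1) + n) mod n" unfolding p_def by (simp only: e)
        also have "\<dots> = (m - 1) mod n" by (simp only: mod_add_self2)
        also have "\<dots> = m - 1" using 3 by (intro mod_less) linarith
        finally have "p = m - 1" .
        moreover have "q = m + 1" unfolding q_def using 3 by (intro mod_less) linarith
        ultimately show ?thesis using 3 by linarith
      qed
    qed
    have a1: "adj E (xs ! m) (xs ! p)" using adjnext[OF pn(1)] pm adj_sym by metis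
    have a2: "adj E (xs ! m) (xs ! q)" using adjnext[OF m(1)] q_def by simp
    have P1: "xs ! p \<in> V \<and> (xs ! m = s (xs ! p) \<or> xs ! m = t (xs ! p))" by (rule par[OF a1 mx[OF pn(1)]])
    have P2: "xs ! q \<in> V \<and> (xs ! m = s (xs ! q) \<or> xs ! m = t (xs ! q))" by (rule par[OF a2 mx[OF pn(2)]])
    have "xs ! p = xs ! q"
      by (rule par_uniq[OF conjunct1[OF P1] conjunct1[OF P2] conjunct2[OF P1] conjunct2[OF P2]])
    then show False using dist pn pq by (simp add: nth_eq_iff_index_eq n_def)
  qed
  have inf: "infinite V"
  proof
    assume "finite V"
    then have "s ` V = V" using endo_inj_surj[of V s] sV sinj by auto
    then have "r \<in> s ` V" using r by simp
    then show False using rs by auto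
  qed
  have nb: "neighbours E w = {s w, t w} \<union> {v \<in> V. s v = w} \<union> {v \<in> V. t v = w}" if wV: "w \<in> V" for w
  proof (rule set_eqI)
    fix x
    show "x \<in> neighbours E w \<longleftrightarrow> x \<in> {s w, t w} \<union> {v \<in> V. s v = w} \<union> {v \<in> V. t v = w}"
      unfolding neighbours_def mem_Collect_eq adj_iff using wV by blast
  qed
  have e1: "{v \<in> V. s v = r} = {}" "{v \<in> V. t v = r} = {}" using rs by blast+
  have nbr: "neighbours E r = {s r, t r}" using nb[OF r] e1 by simp
  have "s r \<noteq> t r" using disj r by blast
  then have cr: "card (neighbours E r) = 2" using nbr by simp
  have cw: "card (neighbours E w) = 3" if w: "w \<in> V - {r}" for w
  proof -
    obtain p where p: "p \<in> V" "w = s p \<or> w = t p" using cover w by auto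
    have wV: "w \<in> V" using w by auto
    have NB: "neighbours E w = {s w, t w, p}"
    proof -
      have "{v \<in> V. s v = w} \<union> {v \<in> V. t v = w} = {p}"
      proof -
        have "v = p" if "v \<in> V" "s v = w \<or> t v = w" for v
          using par_uniq[of v p w] p that by auto
        then show ?thesis using p by blast
      qed
      then show ?thesis using nb[OF wV] by simp
    qed
    have D1: "s w \<noteq> t w" using disj wV by auto
    have "h p < h w" using hs p by auto
    moreover have "h (s w) > h w" "h (t w) > h w" using hs wV by auto
    ultimately have "p \<noteq> s w" "p \<noteq> t w" by auto
    then show ?thesis using NB D1 by simp
  qed
  show ?thesis
    unfolding infinite_binary_tree_def is_tree_def
    using graph conn nocyc inf r cr cw by simp
qed


definition gexp :: "rat poly \<Rightarrow> nat list" where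
  "gexp P = (THE bs. is_gotzmann_expr bs P)"

lemma gexp_eq:
  assumes "is_gotzmann_expr bs P" shows "gexp P = bs"
  unfolding gexp_def
proof (rule the_equality)
  show "is_gotzmann_expr bs P" by (fact assms)
  fix bs' assume "is_gotzmann_expr bs' P"
  then show "bs' = bs" using assms G_inj[of bs' bs 0] by (auto simp: is_gotzmann_expr_def gotz_G)
qed

lemma gz: "bs \<noteq> [] \<Longrightarrow> sorted_wrt (\<ge>) bs \<Longrightarrow> is_gotzmann_expr bs (gotzmann_poly bs)"
  by (simp add: is_gotzmann_expr_def)

lemma gdeg: "bs \<noteq> [] \<Longrightarrow> sorted_wrt (\<ge>) bs \<Longrightarrow> degree (gotzmann_poly bs) = hd bs"
  by (simp add: gotz_G G_deg)

lemma ginj: "sorted_wrt (\<ge>) bs \<Longrightarrow> sorted_wrt (\<ge>) cs \<Longrightarrow> gotzmann_poly bs = gotzmann_poly cs \<Longrightarrow> bs = cs"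
  by (simp add: gotz_G G_inj)

lemma gsig: "sigma_hp (gotzmann_poly bs) = gotzmann_poly (bs @ [0])"
  by (simp add: sigma_hp_def gotz_G G_snoc)

lemma glam: "bs \<noteq> [] \<Longrightarrow> sorted_wrt (\<ge>) bs \<Longrightarrow> lambda_hp (gotzmann_poly bs) = gotzmann_poly (map Suc bs)"
proof -
  assume a: "bs \<noteq> []" "sorted_wrt (\<ge>) bs"
  have "lambda_hp (gotzmann_poly bs) = gotzmann_poly (map Suc (gexp (gotzmann_poly bs)))"
    unfolding lambda_hp_def gexp_def ..
  then show ?thesis using gexp_eq[OF gz[OF a]] by simp
qed

lemma sorted_snoc0: "sorted_wrt (\<ge>) bs \<Longrightarrow> sorted_wrt (\<ge>) (bs @ [0::nat])"
  by (simp add: sorted_wrt_append)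

lemma sorted_mapSuc: "sorted_wrt (\<ge>) bs \<Longrightarrow> sorted_wrt (\<ge>) (map Suc bs)"
  by (simp add: sorted_wrt_map)

lemma Vchar: "(n, P) \<in> H_vertices c \<longleftrightarrow>
    (\<exists>bs. bs \<noteq> [] \<and> sorted_wrt (\<ge>) bs \<and> P = gotzmann_poly bs \<and> n = c + hd bs)"
  unfolding H_vertices_def admissible_def is_gotzmann_expr_def
  by (auto simp: gdeg)

lemma Vchar2: "(n, P) \<in> H_vertices c \<Longrightarrow>
    gexp P \<noteq> [] \<and> sorted_wrt (\<ge>) (gexp P) \<and> gotzmann_poly (gexp P) = P \<and> n = c + hd (gexp P)"
  using Vchar[of n P c] gexp_eq[OF gz] by auto

lemma Vchar3:
  assumes "(n, P) \<in> H_vertices c"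
  obtains bs where "bs \<noteq> []" "sorted_wrt (\<ge>) bs" "P = gotzmann_poly bs" "n = c + hd bs" "gexp P = bs"
  using Vchar2[OF assms] that by metis

theorem theorem4p1:
  fixes c :: nat
  assumes "c \<ge> 1"
  shows "infinite_binary_tree (H_vertices c) (H_edges c) (c, 1)"
proof -
  define V where "V = H_vertices c"
  define s0 where "s0 = (\<lambda>(n::nat, P). (n, sigma_hp P))"
  define t0 where "t0 = (\<lambda>(n::nat, P). (n + 1, lambda_hp P))"
  define h0 where "h0 = (\<lambda>(n::nat, P). n + length (gexp P))"
  have one: "(1 :: rat poly) = gotzmann_poly [0]" by (simp add: gotz_G binom_poly_def)
  have E: "H_edges c = {{v, s0 v} | v. v \<in> V} \<union> {{v, t0 v} | v. v \<in> V}"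
    unfolding H_edges_def V_def H_vertices_def s0_def t0_def by auto
  have r: "(c, 1) \<in> V" unfolding V_def Vchar one by (intro exI[of _ "[0]"]) simp
  have sV: "\<forall>v\<in>V. s0 v \<in> V"
  proof
    fix v assume vV: "v \<in> V"
    obtain n P where v: "v = (n, P)" by (cases v)
    have "(n, P) \<in> H_vertices c" using vV v V_def by simp
    then obtain bs where g: "bs \<noteq> []" "sorted_wrt (\<ge>) bs" "P = gotzmann_poly bs" "n = c + hd bs"
      by (rule Vchar3)
    have "(n, sigma_hp P) \<in> V" unfolding V_def Vchar
      using g gsig[of bs] sorted_snoc0[of bs]
      by (intro exI[of _ "bs @ [0]"]) auto
    then show "s0 v \<in> V" by (simp add: v s0_def)
  qed
  have tV: "\<forall>v\<in>V. t0 v \<in> V"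
  proof
    fix v assume vV: "v \<in> V"
    obtain n P where v: "v = (n, P)" by (cases v)
    have "(n, P) \<in> H_vertices c" using vV v V_def by simp
    then obtain bs where g: "bs \<noteq> []" "sorted_wrt (\<ge>) bs" "P = gotzmann_poly bs" "n = c + hd bs"
      by (rule Vchar3)
    have "(n + 1, lambda_hp P) \<in> V" unfolding V_def Vchar
      using g glam[of bs] sorted_mapSuc[of bs]
      by (intro exI[of _ "map Suc bs"]) (auto simp: hd_map)
    then show "t0 v \<in> V" by (simp add: v t0_def)
  qed
  have sinj: "inj_on s0 V"
    unfolding s0_def sigma_hp_def by (auto intro!: inj_onI)
  have tinj: "inj_on t0 V"
  proof (rule inj_onI)
    fix v w assume vV: "v \<in> V" and wV: "w \<in> V" and eq: "t0 v = t0 w"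
    obtain n P where v: "v = (n, P)" by (cases v)
    obtain m Q where w: "w = (m, Q)" by (cases w)
    have "(n, P) \<in> H_vertices c" using vV v V_def by simp
    then obtain bs where g: "bs \<noteq> []" "sorted_wrt (\<ge>) bs" "P = gotzmann_poly bs" "n = c + hd bs"
      by (rule Vchar3)
    have "(m, Q) \<in> H_vertices c" using wV w V_def by simp
    then obtain cs where g2: "cs \<noteq> []" "sorted_wrt (\<ge>) cs" "Q = gotzmann_poly cs" "m = c + hd cs"
      by (rule Vchar3)
    have l: "lambda_hp P = lambda_hp Q" and nm: "n = m" using eq v w t0_def by auto
    have "gotzmann_poly (map Suc bs) = gotzmann_poly (map Suc cs)"
      using l glam[OF g(1,2)] glam[OF g2(1,2)] g(3) g2(3) by simp
    then have "map Suc bs = map Suc cs"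
      using ginj[OF sorted_mapSuc[OF g(2)] sorted_mapSuc[OF g2(2)]] by blast
    then have "bs = cs" by (simp add: inj_map_eq_map)
    then have "P = Q" using g(3) g2(3) by simp
    then show "v = w" using v w nm by simp
  qed
  have disj: "\<forall>v\<in>V. \<forall>w\<in>V. s0 v \<noteq> t0 w"
  proof (intro ballI notI)
    fix v w assume vV: "v \<in> V" and wV: "w \<in> V" and eq: "s0 v = t0 w"
    obtain n P where v: "v = (n, P)" by (cases v)
    obtain m Q where w: "w = (m, Q)" by (cases w)
    have "(n, P) \<in> H_vertices c" using vV v V_def by simp
    then obtain bs where g: "bs \<noteq> []" "sorted_wrt (\<ge>) bs" "P = gotzmann_poly bs" "n = c + hd bs"
      by (rule Vchar3)
    have "(m, Q) \<in> H_vertices c" using wV w V_def by simp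
    then obtain cs where g2: "cs \<noteq> []" "sorted_wrt (\<ge>) cs" "Q = gotzmann_poly cs" "m = c + hd cs"
      by (rule Vchar3)
    have l: "sigma_hp P = lambda_hp Q" using eq v w s0_def t0_def by auto
    have "gotzmann_poly (bs @ [0]) = gotzmann_poly (map Suc cs)"
      using l glam[OF g2(1,2)] gsig[of bs] g(3) g2(3) by simp
    then have "bs @ [0] = map Suc cs"
      using ginj[OF sorted_snoc0[OF g(2)] sorted_mapSuc[OF g2(2)]] by blast
    then have "last (bs @ [0]) = last (map Suc cs)" by simp
    then show False using g2(1) by (simp add: last_map)
  qed
  have s1: "sorted_wrt (\<ge>) [0::nat]" by simp
  have rs: "\<forall>v\<in>V. s0 v \<noteq> (c, 1) \<and> t0 v \<noteq> (c, 1)"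
  proof (intro ballI conjI notI)
    fix v assume vV: "v \<in> V"
    obtain n P where v: "v = (n, P)" by (cases v)
    have "(n, P) \<in> H_vertices c" using vV v V_def by simp
    then obtain bs where g: "bs \<noteq> []" "sorted_wrt (\<ge>) bs" "P = gotzmann_poly bs" "n = c + hd bs"
      by (rule Vchar3)
    {
      assume "s0 v = (c, 1)"
      then have "sigma_hp P = 1" using v s0_def by auto
      then have "gotzmann_poly (bs @ [0]) = gotzmann_poly [0]"
        using gsig[of bs] one g(3) by simp
      then have "bs @ [0] = [0]"
        using ginj[OF sorted_snoc0[OF g(2)] s1] by blast
      then show False using g(1) by simp
    }
    {
      assume "t0 v = (c, 1)"
      then have "lambda_hp P = 1" using v t0_def by auto
      then have "gotzmann_poly (map Suc bs) = gotzmann_poly [0]"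
        using glam[OF g(1,2)] one g(3) by simp
      then have "map Suc bs = [0]"
        using ginj[OF sorted_mapSuc[OF g(2)] s1] by blast
      then show False by (cases bs) auto
    }
  qed
  have cover: "\<forall>w\<in>V. w \<noteq> (c, 1) \<longrightarrow> (\<exists>v\<in>V. w = s0 v \<or> w = t0 v)"
  proof (intro ballI impI)
    fix w assume wV: "w \<in> V" and wr: "w \<noteq> (c, 1)"
    obtain n P where w: "w = (n, P)" by (cases w)
    have "(n, P) \<in> H_vertices c" using wV w V_def by simp
    then obtain bs where g: "bs \<noteq> []" "sorted_wrt (\<ge>) bs" "P = gotzmann_poly bs" "n = c + hd bs"
      by (rule Vchar3)
    show "\<exists>v\<in>V. w = s0 v \<or> w = t0 v"
    proof (cases "last bs = 0")
      case True
      define cs where "cs = butlast bs"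
      have bsc: "bs = cs @ [0]" using True g(1) cs_def by (metis append_butlast_last_id)
      have csne: "cs \<noteq> []"
      proof
        assume "cs = []"
        then have "bs = [0]" using bsc by simp
        then have "w = (c, 1)" using g w one by simp
        then show False using wr by simp
      qed
      have css: "sorted_wrt (\<ge>) cs" using g(2) bsc by (simp add: sorted_wrt_append)
      have hdc: "hd bs = hd cs" using bsc csne by simp
      have vV: "(c + hd cs, gotzmann_poly cs) \<in> V" unfolding V_def Vchar using csne css by blast
      have "s0 (c + hd cs, gotzmann_poly cs) = w"
        using g(3,4) w hdc bsc gsig[of cs] s0_def by simp
      then show ?thesis using vV by metis
    next
      case False
      define cs where "cs = map (\<lambda>x. x - 1) bs"
      have pos: "\<forall>x\<in>set bs. x > 0"
      proof
        fix x assume x: "x \<in> set bs"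
        have bl: "bs = butlast bs @ [last bs]" using g(1) by simp
        have "last bs \<le> x"
        proof (cases "x = last bs")
          case True then show ?thesis by simp
        next
          case False
          then have "x \<in> set (butlast bs)" using x bl by (metis in_set_butlast_appendI butlast_snoc last_in_set rotate1.simps(2) set_ConsD set_rotate1)
          moreover have "sorted_wrt (\<ge>) (butlast bs @ [last bs])" using g(2) bl by simp
          ultimately show ?thesis by (simp add: sorted_wrt_append)
        qed
        then show "x > 0" using \<open>last bs \<noteq> 0\<close> by simp
      qed
      have bsc: "bs = map Suc cs" unfolding cs_def using pos by (induction bs) auto
      have csne: "cs \<noteq> []" using g(1) cs_def by simp
      have css: "sorted_wrt (\<ge>) cs" using g(2) bsc by (simp add: sorted_wrt_map)
      have hdc: "hd bs = Suc (hd cs)" using bsc csne by (simp add: hd_map)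
      have vV: "(c + hd cs, gotzmann_poly cs) \<in> V" unfolding V_def Vchar using csne css by blast
      have "t0 (c + hd cs, gotzmann_poly cs) = w"
        using g(3,4) w hdc bsc glam[OF csne css] t0_def by simp
      then show ?thesis using vV by metis
    qed
  qed
  have hs: "\<forall>v\<in>V. h0 (s0 v) = Suc (h0 v) \<and> h0 (t0 v) = Suc (h0 v)"
  proof
    fix v assume vV: "v \<in> V"
    obtain n P where v: "v = (n, P)" by (cases v)
    have "(n, P) \<in> H_vertices c" using vV v V_def by simp
    then obtain bs where g: "bs \<noteq> []" "sorted_wrt (\<ge>) bs" "P = gotzmann_poly bs" "n = c + hd bs" "gexp P = bs"
      by (rule Vchar3)
    have a0: "sigma_hp P = gotzmann_poly (bs @ [0])" using g(3) gsig[of bs] by simp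
    have a: "gexp (sigma_hp P) = bs @ [0]"
      unfolding a0 using g(1,2) by (intro gexp_eq gz sorted_snoc0) auto
    have b0: "lambda_hp P = gotzmann_poly (map Suc bs)" using g(3) glam[OF g(1,2)] by simp
    have b: "gexp (lambda_hp P) = map Suc bs"
      unfolding b0 using g(1,2) by (intro gexp_eq gz sorted_mapSuc) auto
    show "h0 (s0 v) = Suc (h0 v) \<and> h0 (t0 v) = Suc (h0 v)"
      using a b g(5) v h0_def s0_def t0_def by simp
  qed
  show ?thesis
    using abstract_tree[OF E r sV tV sinj tinj disj rs cover hs] V_def by simp
qed

end
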